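(* Let $M$ be an $n\times n$ Hermitian positive definite matrix which is irreducible. If the argument of each non-zero off-diagonal entry of $-M$ lies in $\left(-\frac{\pi}{2^n},\frac{\pi}{2^n}\right)$, then each entry of $M^{-1}$ has argument in $\left(-\frac{\pi}{2}+\frac{\pi}{2^n},\ \frac{\pi}{2}-\frac{\pi}{2^n}\right)$.
   Context: A square matrix is irreducible if it cannot be brought into block-diagonal form (with at least two diagonal blocks) by a simultaneous permutation of its rows and columns. *)

theory Defs
  imports "HOL-Analysis.Analysis"
begin

definition hermitian_mat :: "complex^'n^'n \<Rightarrow> bool" where
  "hermitian_mat M \<longleftrightarrow> (\<forall>i j. M $ i $ j = cnj (M $ j $ i))"

definition pos_def_mat :: "complex^'n^'n \<Rightarrow> bool" where
  "pos_def_mat M \<longleftrightarrow>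
     (\<forall>x :: complex^'n. x \<noteq> 0 \<longrightarrow>
        (let q = (\<Sum>i\<in>UNIV. \<Sum>j\<in>UNIV. cnj (x $ i) * M $ i $ j * x $ j)
         in Im q = 0 \<and> 0 < Re q))"

text \<open>A simultaneous permutation of rows and columns brings M into block-diagonal form
  with at least two diagonal blocks iff the index set splits into a nonempty proper subset S
  and its complement with all entries between S and its complement equal to zero.\<close>
definition reducible_mat :: "'a::zero^'n^'n \<Rightarrow> bool" where
  "reducible_mat M \<longleftrightarrow>
     (\<exists>S :: 'n set. S \<noteq> {} \<and> S \<noteq> UNIV \<and>
        (\<forall>i\<in>S. \<forall>j. j \<notin> S \<longrightarrow> M $ i $ j = 0 \<and> M $ j $ i = 0))"

definition irreducible_mat :: "'a::zero^'n^'n \<Rightarrow> bool" where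
  "irreducible_mat M \<longleftrightarrow> \<not> reducible_mat M"

end

theory Submission
  imports Defs
begin

definition cone :: "real \<Rightarrow> complex \<Rightarrow> bool" where
  "cone t z \<longleftrightarrow> (\<exists>r f. r > 0 \<and> \<bar>f\<bar> < t \<and> z = rcis r f)"

definition ccone :: "real \<Rightarrow> complex \<Rightarrow> bool" where
  "ccone t z \<longleftrightarrow> (\<exists>r f. r > 0 \<and> \<bar>f\<bar> \<le> t \<and> z = rcis r f)"

lemma cone_nz: "cone t z \<Longrightarrow> z \<noteq> 0"
  unfolding cone_def by auto

lemma cone_ccone: "cone t z \<Longrightarrow> ccone t z"
  unfolding cone_def ccone_def by force

lemma cone_mono: "cone a z \<Longrightarrow> a \<le> b \<Longrightarrow> cone b z"
  unfolding cone_def by force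

lemma ccone_mono: "ccone a z \<Longrightarrow> a \<le> b \<Longrightarrow> ccone b z"
  unfolding ccone_def by force

lemma ccone_cone_mono: "ccone a z \<Longrightarrow> a < b \<Longrightarrow> cone b z"
  unfolding ccone_def cone_def by force

lemma ccone_mult: "ccone a z \<Longrightarrow> cone b w \<Longrightarrow> cone (a+b) (z*w)"
  unfolding ccone_def cone_def
  apply clarify
  subgoal for r f r' f'
    apply (rule exI[of _ "r*f"], rule exI[of _ "r'+f'"])
    by (auto simp: rcis_mult)
  done

lemma cone_mult: "cone a z \<Longrightarrow> cone b w \<Longrightarrow> cone (a+b) (z*w)"
  using ccone_mult cone_ccone by blast

lemma cone_scale: "cone a z \<Longrightarrow> r > 0 \<Longrightarrow> cone a (complex_of_real r * z)"
  unfolding cone_def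
  apply clarify
  subgoal for r' f
    apply (rule exI[of _ "r*r'"], rule exI[of _ "f"])
    by (auto simp: rcis_def)
  done

lemma cone_div: "cone a z \<Longrightarrow> r > 0 \<Longrightarrow> cone a (z / complex_of_real r)"
  using cone_scale[of a z "1/r"] by (simp add: divide_inverse mult.commute)

lemma cone_pos: "r > 0 \<Longrightarrow> 0 < t \<Longrightarrow> cone t (complex_of_real r)"
  unfolding cone_def
  by (rule exI[of _ r], rule exI[of _ 0]) (auto simp: rcis_def)

lemma cone_lin:
  assumes "cone t z" "t \<le> pi/2"
  shows "Im (z * cis t) > 0 \<and> Im (z * cis (-t)) < 0"
proof -
  obtain r f where rf: "r > 0" "\<bar>f\<bar> < t" "z = rcis r f" using assms(1) cone_def by auto
  have "Im (z * cis t) = r * sin (f + t)" using rf by (simp add: rcis_def cis_mult sin_add sin_diff algebra_simps)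
  moreover have "sin (f + t) > 0" by (rule sin_gt_zero) (use rf assms in auto)
  moreover have "Im (z * cis (-t)) = r * sin (f - t)" using rf by (simp add: rcis_def cis_mult sin_add sin_diff algebra_simps)
  moreover have "sin (f - t) < 0"
  proof -
    have "sin (t - f) > 0" by (rule sin_gt_zero) (use rf assms in auto)
    thus ?thesis by (metis minus_diff_eq neg_less_0_iff_less sin_minus)
  qed
  ultimately show ?thesis using rf mult_pos_neg[of r "sin (f - t)"] mult_pos_pos[of r "sin (f + t)"] by auto
qed

lemma lin_cone:
  assumes "Im (z * cis t) > 0" "Im (z * cis (-t)) < 0" "0 < t" "t \<le> pi/2"
  shows "cone t z"
proof -
  have nz: "z \<noteq> 0" using assms by auto
  define r f where "r = cmod z" and "f = Arg z"
  have z: "z = rcis r f" by (simp add: r_def f_def rcis_cmod_Arg)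
  have r: "r > 0" using nz r_def by auto
  have fb: "-pi < f" "f \<le> pi" using Arg_bounded f_def by auto
  have "Im (z * cis t) = r * sin (f + t)" using z by (simp add: rcis_def cis_mult sin_add sin_diff algebra_simps)
  hence s1: "sin (f + t) > 0" using assms r by (simp add: zero_less_mult_iff)
  have "Im (z * cis (-t)) = r * sin (f - t)" using z by (simp add: rcis_def cis_mult sin_add sin_diff algebra_simps)
  hence s2: "sin (f - t) < 0" using assms r by (simp add: mult_less_0_iff)
  have "f < t"
  proof (rule ccontr)
    assume "\<not> f < t"
    hence "0 \<le> sin (f - t)" by (intro sin_ge_zero) (use fb assms in auto)
    with s2 show False by simp
  qed
  moreover have "-t < f"
  proof (rule ccontr)
    assume "\<not> -t < f"
    hence "0 \<le> sin (-(f + t))" by (intro sin_ge_zero) (use fb assms in auto)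
    moreover have "sin (-(f + t)) = - sin (f + t)" by (rule sin_minus)
    ultimately show False using s1 by linarith
  qed
  ultimately show ?thesis unfolding cone_def using z r by (intro exI[of _ r] exI[of _ f]) auto
qed

lemma cone_add: "cone t z \<Longrightarrow> cone t w \<Longrightarrow> 0 < t \<Longrightarrow> t \<le> pi/2 \<Longrightarrow> cone t (z + w)"
  using cone_lin[of t z] cone_lin[of t w]
  by (intro lin_cone) (auto simp: distrib_right)

lemma cone_sum:
  assumes "finite A" "\<forall>k\<in>A. f k = 0 \<or> cone t (f k)" "\<exists>k\<in>A. f k \<noteq> 0" "0 < t" "t \<le> pi/2"
  shows "cone t (sum f A)"
  using assms
proof (induction A rule: finite_induct)
  case empty thus ?case by simp
next
  case (insert x F)
  show ?case
  proof (cases "\<exists>k\<in>F. f k \<noteq> 0")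
    case True
    hence "cone t (sum f F)" using insert by auto
    moreover have "f x = 0 \<or> cone t (f x)" using insert by auto
    ultimately show ?thesis using insert cone_add by auto
  next
    case False
    hence "sum f F = 0" by simp
    moreover have "f x \<noteq> 0" using False insert by auto
    ultimately show ?thesis using insert by auto
  qed
qed

lemma cone_Arg: "cone t z \<Longrightarrow> t \<le> pi \<Longrightarrow> z \<noteq> 0 \<and> Arg z \<in> {-t<..<t}"
proof -
  assume a: "cone t z" "t \<le> pi"
  then obtain r f where rf: "r > 0" "\<bar>f\<bar> < t" "z = rcis r f" using cone_def by auto
  have "Arg z = f" using rf a by (intro Arg_rcis[of f r, simplified rf(3)[symmetric]]) auto
  thus ?thesis using rf a(1) cone_nz by auto
qed

lemma Arg_cone: "z \<noteq> 0 \<Longrightarrow> Arg z \<in> {-t<..<t} \<Longrightarrow> cone t z"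
  unfolding cone_def using rcis_cmod_Arg[of z]
  by (intro exI[of _ "cmod z"] exI[of _ "Arg z"]) auto


lemma ccone_nz: "ccone t z \<Longrightarrow> z \<noteq> 0"
  unfolding ccone_def by auto

definition form :: "'n set \<Rightarrow> ('n \<Rightarrow> 'n \<Rightarrow> complex) \<Rightarrow> ('n \<Rightarrow> complex) \<Rightarrow> complex" where
  "form S M x = (\<Sum>i\<in>S. \<Sum>j\<in>S. cnj (x i) * M i j * x j)"

definition good :: "'n set \<Rightarrow> ('n \<Rightarrow> 'n \<Rightarrow> complex) \<Rightarrow> bool" where
  "good S M \<longleftrightarrow> (\<forall>i\<in>S. \<forall>j\<in>S. M i j = cnj (M j i)) \<and>
     (\<forall>x. (\<forall>i. i \<notin> S \<longrightarrow> x i = 0) \<longrightarrow> (\<exists>i\<in>S. x i \<noteq> 0) \<longrightarrow>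
         Im (form S M x) = 0 \<and> 0 < Re (form S M x)) \<and>
     (\<forall>A. A \<subseteq> S \<longrightarrow> A \<noteq> {} \<longrightarrow> A \<noteq> S \<longrightarrow> (\<exists>i\<in>A. \<exists>j\<in>S - A. M i j \<noteq> 0)) \<and>
     (\<forall>i\<in>S. \<forall>j\<in>S. i \<noteq> j \<longrightarrow> M i j \<noteq> 0 \<longrightarrow> cone (pi / 2 ^ card S) (- M i j))"

definition inv_on :: "'n set \<Rightarrow> ('n \<Rightarrow> 'n \<Rightarrow> complex) \<Rightarrow> ('n \<Rightarrow> 'n \<Rightarrow> complex) \<Rightarrow> bool" where
  "inv_on S M X \<longleftrightarrow> (\<forall>i\<in>S. \<forall>j\<in>S. (\<Sum>k\<in>S. M i k * X k j) = (if i = j then 1 else 0))"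

definition schur :: "('n \<Rightarrow> 'n \<Rightarrow> complex) \<Rightarrow> 'n \<Rightarrow> 'n \<Rightarrow> 'n \<Rightarrow> complex" where
  "schur M p = (\<lambda>i j. M i j - M i p * M p j / M p p)"

lemma good_herm: "good S M \<Longrightarrow> \<forall>i\<in>S. \<forall>j\<in>S. M i j = cnj (M j i)"
  unfolding good_def by (elim conjE)

lemma good_pd: "good S M \<Longrightarrow> \<forall>x. (\<forall>i. i \<notin> S \<longrightarrow> x i = 0) \<longrightarrow> (\<exists>i\<in>S. x i \<noteq> 0) \<longrightarrow>
         Im (form S M x) = 0 \<and> 0 < Re (form S M x)"
  unfolding good_def by (elim conjE)

lemma good_irr: "good S M \<Longrightarrow> \<forall>A. A \<subseteq> S \<longrightarrow> A \<noteq> {} \<longrightarrow> A \<noteq> S \<longrightarrow> (\<exists>i\<in>A. \<exists>j\<in>S - A. M i j \<noteq> 0)"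
  unfolding good_def by (elim conjE)

lemma good_cone: "good S M \<Longrightarrow> \<forall>i\<in>S. \<forall>j\<in>S. i \<noteq> j \<longrightarrow> M i j \<noteq> 0 \<longrightarrow> cone (pi / 2 ^ card S) (- M i j)"
  unfolding good_def by (elim conjE)

lemma good_intro:
  assumes "\<forall>i\<in>S. \<forall>j\<in>S. M i j = cnj (M j i)"
   "\<forall>x. (\<forall>i. i \<notin> S \<longrightarrow> x i = 0) \<longrightarrow> (\<exists>i\<in>S. x i \<noteq> 0) \<longrightarrow>
         Im (form S M x) = 0 \<and> 0 < Re (form S M x)"
   "\<forall>A. A \<subseteq> S \<longrightarrow> A \<noteq> {} \<longrightarrow> A \<noteq> S \<longrightarrow> (\<exists>i\<in>A. \<exists>j\<in>S - A. M i j \<noteq> 0)"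
   "\<forall>i\<in>S. \<forall>j\<in>S. i \<noteq> j \<longrightarrow> M i j \<noteq> 0 \<longrightarrow> cone (pi / 2 ^ card S) (- M i j)"
  shows "good S M"
  unfolding good_def using assms by (intro conjI)

lemma diag_pos:
  assumes "finite S" "good S M" "p \<in> S"
  shows "M p p = complex_of_real (Re (M p p)) \<and> Re (M p p) > 0"
proof -
  define x where "x = (\<lambda>i. if i = p then (1::complex) else 0)"
  have "form S M x = M p p" using assms(1,3) unfolding form_def x_def
    by (simp add: if_distrib[of cnj] if_distrib[where f="\<lambda>x. x * _"] if_distrib[where f="\<lambda>x. _ * x"] cong: if_cong)
  moreover have "Im (form S M x) = 0 \<and> 0 < Re (form S M x)"
  proof -
    note pd = good_pd[OF assms(2)]
    have "\<forall>i. i \<notin> S \<longrightarrow> x i = 0" using assms(3) x_def by auto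
    moreover have "\<exists>i\<in>S. x i \<noteq> 0" using assms(3) x_def by auto
    ultimately show ?thesis using pd by blast
  qed
  ultimately show ?thesis by (simp add: complex_eq_iff)
qed

lemma form_insert:
  assumes "finite T" "p \<notin> T" "v p = t" "\<And>i. i \<in> T \<Longrightarrow> v i = u i"
  shows "form (insert p T) M v =
    cnj t * M p p * t + cnj t * (\<Sum>j\<in>T. M p j * u j) + (\<Sum>i\<in>T. cnj (u i) * M i p) * t + form T M u"
proof -
  note e = assms(4)
  have "form (insert p T) M v =
     (\<Sum>j\<in>insert p T. cnj (v p) * M p j * v j) +
     (\<Sum>i\<in>T. \<Sum>j\<in>insert p T. cnj (v i) * M i j * v j)"
    unfolding form_def using assms(1,2) by simp
  also have "(\<Sum>j\<in>insert p T. cnj (v p) * M p j * v j) = cnj t * M p p * t + cnj t * (\<Sum>j\<in>T. M p j * u j)"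
    using assms by (simp add: sum_distrib_left mult.assoc cong: sum.cong)
  also have "(\<Sum>i\<in>T. \<Sum>j\<in>insert p T. cnj (v i) * M i j * v j) =
       (\<Sum>i\<in>T. cnj (u i) * M i p * t + (\<Sum>j\<in>T. cnj (u i) * M i j * u j))"
  proof (rule sum.cong[OF refl])
    fix i assume i: "i \<in> T"
    have "(\<Sum>j\<in>insert p T. cnj (v i) * M i j * v j) = cnj (v i) * M i p * v p + (\<Sum>j\<in>T. cnj (v i) * M i j * v j)"
      using assms by simp
    also have "(\<Sum>j\<in>T. cnj (v i) * M i j * v j) = (\<Sum>j\<in>T. cnj (u i) * M i j * u j)"
      by (rule sum.cong) (auto simp: e i)
    finally show "(\<Sum>j\<in>insert p T. cnj (v i) * M i j * v j) = cnj (u i) * M i p * t + (\<Sum>j\<in>T. cnj (u i) * M i j * u j)"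
      using i e assms(3) by simp
  qed
  also have "\<dots> = (\<Sum>i\<in>T. cnj (u i) * M i p) * t + form T M u"
    unfolding form_def by (simp add: sum.distrib sum_distrib_right)
  finally show ?thesis by (simp only: add.assoc)
qed


lemma schur_good:
  assumes fin: "finite S" and g: "good S M" and p: "p \<in> S" and c2: "card S \<ge> 2"
  shows "good (S - {p}) (schur M p)"
proof -
  define T where "T = S - {p}"
  define a where "a = M p p"
  define ar where "ar = Re (M p p)"
  have a: "a = complex_of_real ar" "ar > 0" using diag_pos[OF fin g p] a_def ar_def by auto
  have anz: "a \<noteq> 0" using a by auto
  have ST: "S = insert p T" "p \<notin> T" "finite T" using p fin T_def by auto
  have cT: "card T = card S - 1" using T_def fin p by simp
  have cT1: "card T \<ge> 1" using cT c2 by simp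
  have pw: "(2::real) ^ card S = 2 * 2 ^ card T" using cT c2
    by (metis Suc_diff_1 le_trans one_le_numeral order_less_le_trans power_Suc zero_less_one c2 cT1 less_le_trans)
  have herm: "\<And>i j. i \<in> S \<Longrightarrow> j \<in> S \<Longrightarrow> M i j = cnj (M j i)" using good_herm[OF g] by blast
  have sch: "\<And>i j. schur M p i j = M i j - M i p * M p j / a" unfolding schur_def a_def by simp
  define th where "th = pi / 2 ^ card T"
  have th_pos: "0 < th" unfolding th_def by simp
  have th_le: "th \<le> pi / 2"
  proof -
    have "(2::real) ^ 1 \<le> 2 ^ card T" using cT1 by (intro power_increasing) auto
    thus ?thesis unfolding th_def by (intro divide_left_mono) auto
  qed
  have thS: "pi / 2 ^ card S + pi / 2 ^ card S = th" unfolding th_def pw by (simp add: field_simps)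
  have thS_le: "pi / 2 ^ card S \<le> th" using thS by (smt (verit) pi_gt_zero divide_pos_pos zero_less_power)
  have mc: "\<And>i j. i \<in> S \<Longrightarrow> j \<in> S \<Longrightarrow> i \<noteq> j \<Longrightarrow> M i j \<noteq> 0 \<Longrightarrow> cone (pi / 2 ^ card S) (- M i j)"
    using good_cone[OF g] by blast
  have prodc: "cone th ((- M i p) * (- M p j) / a)" if "i \<in> T" "j \<in> T" "M i p \<noteq> 0" "M p j \<noteq> 0" for i j
  proof -
    have "cone (pi / 2 ^ card S + pi / 2 ^ card S) ((- M i p) * (- M p j))"
      using that ST by (intro cone_mult mc) auto
    hence "cone th ((- M i p) * (- M p j))" using thS by simp
    thus ?thesis using a cone_div by simp
  qed
  have negsch: "- schur M p i j = - M i j + (- M i p) * (- M p j) / a" for i j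
    unfolding sch by simp
  show ?thesis unfolding T_def[symmetric]
  proof (rule good_intro)
    show "\<forall>i\<in>T. \<forall>j\<in>T. schur M p i j = cnj (schur M p j i)"
    proof (intro ballI)
      fix i j assume ij: "i \<in> T" "j \<in> T"
      have h: "cnj (M j i) = M i j" "cnj (M j p) = M p j" "cnj (M p i) = M i p"
        using herm ij ST p by (metis complex_cnj_cnj insert_iff)+
      show "schur M p i j = cnj (schur M p j i)"
        unfolding sch using h a by (simp add: mult.commute)
    qed
  next
    show "\<forall>u. (\<forall>i. i \<notin> T \<longrightarrow> u i = 0) \<longrightarrow> (\<exists>i\<in>T. u i \<noteq> 0) \<longrightarrow>
         Im (form T (schur M p) u) = 0 \<and> 0 < Re (form T (schur M p) u)"
    proof (intro allI impI)
      fix u :: "_ \<Rightarrow> complex" assume u0: "\<forall>i. i \<notin> T \<longrightarrow> u i = 0" and unz: "\<exists>i\<in>T. u i \<noteq> 0"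
      define sv where "sv = (\<Sum>j\<in>T. M p j * u j)"
      define sv' where "sv' = (\<Sum>i\<in>T. cnj (u i) * M i p)"
      have svc: "sv' = cnj sv" unfolding sv_def sv'_def
        by (simp add: mult.commute) (intro sum.cong refl, use herm ST p in \<open>metis insert_iff\<close>)
      define t where "t = - sv / a"
      define v where "v = u(p := t)"
      have fv: "form S M v = cnj t * a * t + cnj t * sv + sv' * t + form T M u"
        unfolding ST(1) a_def sv_def sv'_def by (rule form_insert) (use ST v_def in auto)
      have fs: "form T (schur M p) u = form T M u - sv' * sv / a"
      proof -
        have "form T (schur M p) u = (\<Sum>i\<in>T. \<Sum>j\<in>T. cnj (u i) * M i j * u j - (cnj (u i) * M i p) * (M p j * u j) / a)"
          unfolding form_def sch by (intro sum.cong refl) (simp add: algebra_simps)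
        also have "\<dots> = form T M u - (\<Sum>i\<in>T. \<Sum>j\<in>T. (cnj (u i) * M i p) * (M p j * u j)) / a"
          unfolding form_def by (simp add: sum_subtractf sum_divide_distrib)
        also have "(\<Sum>i\<in>T. \<Sum>j\<in>T. (cnj (u i) * M i p) * (M p j * u j)) = sv' * sv"
          unfolding sv_def sv'_def by (simp add: sum_product)
        finally show ?thesis .
      qed
      have ct: "cnj t = - cnj sv / a" unfolding t_def using a by simp
      have eq: "form S M v = form T (schur M p) u"
        unfolding fv fs using anz by (simp add: ct t_def svc field_simps)
      have "Im (form S M v) = 0 \<and> 0 < Re (form S M v)"
      proof (rule good_pd[OF g, THEN spec, THEN mp, THEN mp])
        show "\<forall>i. i \<notin> S \<longrightarrow> v i = 0" using u0 v_def T_def p by auto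
        show "\<exists>i\<in>S. v i \<noteq> 0" using unz v_def ST by auto
      qed
      thus "Im (form T (schur M p) u) = 0 \<and> 0 < Re (form T (schur M p) u)" using eq by simp
    qed
  next
    show "\<forall>A. A \<subseteq> T \<longrightarrow> A \<noteq> {} \<longrightarrow> A \<noteq> T \<longrightarrow> (\<exists>i\<in>A. \<exists>j\<in>T - A. schur M p i j \<noteq> 0)"
    proof (intro allI impI)
      fix A assume A: "A \<subseteq> T" "A \<noteq> {}" "A \<noteq> T"
      show "\<exists>i\<in>A. \<exists>j\<in>T - A. schur M p i j \<noteq> 0"
      proof (rule ccontr)
        assume nz: "\<not> ?thesis"
        hence z: "\<And>i j. i \<in> A \<Longrightarrow> j \<in> T - A \<Longrightarrow> schur M p i j = 0" by blast
        show False
        proof (cases "\<exists>i\<in>A. M i p \<noteq> 0")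
          case True
          then obtain i where i: "i \<in> A" "M i p \<noteq> 0" by blast
          show False
          proof (cases "\<exists>j\<in>T - A. M p j \<noteq> 0")
            case True
            then obtain j where j: "j \<in> T - A" "M p j \<noteq> 0" by blast
            have ij: "i \<in> T" "j \<in> T" "i \<noteq> j" using i j A by auto
            have c1: "cone th ((- M i p) * (- M p j) / a)" using prodc ij i j by auto
            have "cone th (- schur M p i j)"
            proof (cases "M i j = 0")
              case True thus ?thesis using c1 negsch by simp
            next
              case False
              hence "cone th (- M i j)" using mc ij ST thS_le cone_mono by blast
              thus ?thesis unfolding negsch using c1 cone_add th_pos th_le by blast
            qed
            thus False using z i j cone_nz by fastforce
          next
            case False
            have "insert p A \<subseteq> S" "insert p A \<noteq> {}" "insert p A \<noteq> S" using A ST by auto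
            then obtain i' j where ij: "i' \<in> insert p A" "j \<in> S - insert p A" "M i' j \<noteq> 0"
              using good_irr[OF g] by blast
            have jT: "j \<in> T - A" using ij ST by auto
            hence "i' \<noteq> p" using False ij by auto
            hence "i' \<in> A" using ij by auto
            moreover have "schur M p i' j = M i' j" using False jT unfolding sch by auto
            ultimately show False using z jT ij by auto
          qed
        next
          case False
          have "A \<subseteq> S" "A \<noteq> {}" "A \<noteq> S" using A ST by auto
          then obtain i j where ij: "i \<in> A" "j \<in> S - A" "M i j \<noteq> 0"
            using good_irr[OF g] by blast
          have "j \<noteq> p" using False ij by auto
          hence jT: "j \<in> T - A" using ij ST by auto
          have "schur M p i j = M i j" using False ij unfolding sch by auto
          thus False using z jT ij by auto
        qed
      qed
    qed
  next
    show "\<forall>i\<in>T. \<forall>j\<in>T. i \<noteq> j \<longrightarrow> schur M p i j \<noteq> 0 \<longrightarrow> cone (pi / 2 ^ card T) (- schur M p i j)"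
    proof (intro ballI impI)
      fix i j assume ij: "i \<in> T" "j \<in> T" "i \<noteq> j" and snz: "schur M p i j \<noteq> 0"
      have c0: "M i j \<noteq> 0 \<Longrightarrow> cone th (- M i j)" using mc ij ST thS_le cone_mono by blast
      have "cone th (- schur M p i j)"
      proof (cases "M i p \<noteq> 0 \<and> M p j \<noteq> 0")
        case True
        hence c1: "cone th ((- M i p) * (- M p j) / a)" using prodc ij by auto
        show ?thesis
        proof (cases "M i j = 0")
          case True thus ?thesis using c1 negsch by simp
        next
          case False
          thus ?thesis unfolding negsch using c0 c1 cone_add th_pos th_le by blast
        qed
      next
        case False
        hence "schur M p i j = M i j" unfolding sch by auto
        thus ?thesis using c0 snz by simp
      qed
      thus "cone (pi / 2 ^ card T) (- schur M p i j)" unfolding th_def .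
    qed
  qed
qed


lemma col_form:
  assumes "finite S" "inv_on S M X" "p \<in> S"
  shows "form S M (\<lambda>i. X i p) = cnj (X p p)"
proof -
  have "form S M (\<lambda>i. X i p) = (\<Sum>i\<in>S. cnj (X i p) * (\<Sum>j\<in>S. M i j * X j p))"
    unfolding form_def by (simp add: sum_distrib_left mult.assoc)
  also have "\<dots> = (\<Sum>i\<in>S. cnj (X i p) * (if i = p then 1 else 0))"
    using assms(2,3) unfolding inv_on_def by (intro sum.cong refl) auto
  also have "\<dots> = cnj (X p p)" using assms(1,3)
    by (simp add: if_distrib[where f="\<lambda>x. _ * x"] cong: if_cong)
  finally show ?thesis .
qed

lemma diag_inv_cone:
  assumes fin: "finite S" and g: "good S M" and X: "inv_on S M X" and p: "p \<in> S" and t: "0 < t"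
  shows "cone t (X p p)"
proof -
  define x where "x = (\<lambda>i. if i \<in> S then X i p else 0)"
  have "form S M x = form S M (\<lambda>i. X i p)" unfolding form_def x_def
    by (intro sum.cong refl) auto
  hence fx: "form S M x = cnj (X p p)" using col_form[OF fin X p] by simp
  have "\<exists>i\<in>S. x i \<noteq> 0"
  proof (rule ccontr)
    assume "\<not> ?thesis"
    hence "\<forall>k\<in>S. X k p = 0" unfolding x_def by auto
    hence "(\<Sum>k\<in>S. M p k * X k p) = 0" by simp
    moreover have "(\<Sum>k\<in>S. M p k * X k p) = 1" using X p unfolding inv_on_def by auto
    ultimately show False by simp
  qed
  moreover have "\<forall>i. i \<notin> S \<longrightarrow> x i = 0" unfolding x_def by auto
  ultimately have "Im (form S M x) = 0 \<and> 0 < Re (form S M x)" using good_pd[OF g] by blast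
  hence "Im (X p p) = 0" "Re (X p p) > 0" using fx by auto
  hence "X p p = complex_of_real (Re (X p p))" "Re (X p p) > 0" by (auto simp: complex_eq_iff)
  thus ?thesis using cone_pos t by metis
qed

lemma neg_div_sum: "(\<Sum>k\<in>T. c k * (- (d k) / a)) = - (\<Sum>k\<in>T. c k * d k) / (a::complex)"
proof -
  have "- (\<Sum>k\<in>T. c k * d k) / a = (\<Sum>k\<in>T. - (c k * d k) / a)"
    by (simp add: sum_divide_distrib sum_negf)
  thus ?thesis by simp
qed

lemma swap_sum:
  fixes f :: "'a \<Rightarrow> complex"
  shows "(\<Sum>k\<in>T. f k * (\<Sum>l\<in>T. g k l * h l)) = (\<Sum>l\<in>T. (\<Sum>k\<in>T. f k * g k l) * h l)"
proof -
  have "(\<Sum>k\<in>T. f k * (\<Sum>l\<in>T. g k l * h l)) = (\<Sum>k\<in>T. \<Sum>l\<in>T. f k * g k l * h l)"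
    by (simp add: sum_distrib_left mult.assoc)
  also have "\<dots> = (\<Sum>l\<in>T. \<Sum>k\<in>T. f k * g k l * h l)" by (rule sum.swap)
  also have "\<dots> = (\<Sum>l\<in>T. (\<Sum>k\<in>T. f k * g k l) * h l)" by (simp add: sum_distrib_right)
  finally show ?thesis .
qed

lemma step:
  assumes fin: "finite S" and g: "good S M" and p: "p \<in> S" and c2: "card S \<ge> 2"
    and Y: "inv_on (S - {p}) (schur M p) Y"
    and yc: "\<forall>i\<in>S - {p}. \<forall>j\<in>S - {p}. ccone (pi / 2 - pi / 2 ^ card (S - {p})) (Y i j)"
  shows "\<exists>X. inv_on S M X \<and> (\<forall>i\<in>S. \<forall>j\<in>S. cone (pi / 2 - pi / 2 ^ card S) (X i j))"
proof -
  define T where "T = S - {p}"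
  define a where "a = M p p"
  define ar where "ar = Re (M p p)"
  have a: "a = complex_of_real ar" "ar > 0" using diag_pos[OF fin g p] a_def ar_def by auto
  have anz: "a \<noteq> 0" using a by auto
  have ST: "S = insert p T" "p \<notin> T" "finite T" using p fin T_def by auto
  have cT: "card T = card S - 1" using T_def fin p by simp
  have cT1: "card T \<ge> 1" using cT c2 by simp
  have pw: "(2::real) ^ card S = 2 * 2 ^ card T" using cT c2
    by (metis Suc_diff_1 le_trans one_le_numeral order_less_le_trans power_Suc zero_less_one c2 cT1 less_le_trans)
  have herm: "\<And>i j. i \<in> S \<Longrightarrow> j \<in> S \<Longrightarrow> M i j = cnj (M j i)" using good_herm[OF g] by blast
  have mc: "\<And>i j. i \<in> S \<Longrightarrow> j \<in> S \<Longrightarrow> i \<noteq> j \<Longrightarrow> M i j \<noteq> 0 \<Longrightarrow> cone (pi / 2 ^ card S) (- M i j)"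
    using good_cone[OF g] by blast
  define thT where "thT = pi / 2 - pi / 2 ^ card T"
  define thS where "thS = pi / 2 - pi / 2 ^ card S"
  have thsum: "thT + pi / 2 ^ card S = thS" unfolding thT_def thS_def pw by (simp add: field_simps)
  have thlt: "thT < thS" using thsum by (smt (verit) pi_gt_zero divide_pos_pos zero_less_power)
  have thS_le: "thS \<le> pi / 2" unfolding thS_def by simp
  have thS_pos: "0 < thS"
  proof -
    have "(2::real) ^ 2 \<le> 2 ^ card S" using c2 by (intro power_increasing) auto
    hence "pi / 2 ^ card S \<le> pi / 4" by (intro divide_left_mono) auto
    thus ?thesis unfolding thS_def using pi_gt_zero by linarith
  qed
  have yc': "\<And>i j. i \<in> T \<Longrightarrow> j \<in> T \<Longrightarrow> ccone thT (Y i j)" using yc unfolding T_def thT_def by blast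
  define W where "W = (\<lambda>l. \<Sum>k\<in>T. M p k * Y k l)"
  define q where "q = (\<Sum>l\<in>T. W l * M l p)"
  define X where "X = (\<lambda>i j. if i = p then (if j = p then 1 / a + q / a^2 else - W j / a)
                       else (if j = p then - (\<Sum>k\<in>T. Y i k * M k p) / a else Y i j))"
  have YI: "(\<Sum>k\<in>T. M i k * Y k l) = (if i = l then 1 else 0) + M i p / a * W l" if "i \<in> T" "l \<in> T" for i l
  proof -
    have "(\<Sum>k\<in>T. schur M p i k * Y k l) = (if i = l then 1 else 0)" using Y that unfolding inv_on_def T_def by blast
    moreover have "(\<Sum>k\<in>T. schur M p i k * Y k l) = (\<Sum>k\<in>T. M i k * Y k l) - M i p / a * W l"
      unfolding schur_def W_def a_def by (simp add: sum_subtractf sum_distrib_left algebra_simps)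
    ultimately have "(\<Sum>k\<in>T. M i k * Y k l) - M i p / a * W l = (if i = l then 1 else 0)" by simp
    thus ?thesis by (simp only: diff_eq_eq)
  qed
  have sw: "(\<Sum>k\<in>T. f k * (\<Sum>l\<in>T. Y k l * M l p)) = (\<Sum>l\<in>T. (\<Sum>k\<in>T. f k * Y k l) * M l p)" for f
    by (rule swap_sum)
  have XT: "\<And>k j. k \<in> T \<Longrightarrow> X k j = (if j = p then - (\<Sum>l\<in>T. Y k l * M l p) / a else Y k j)"
    using ST unfolding X_def by auto
  have sumS: "(\<Sum>k\<in>S. M i k * X k j) = M i p * X p j + (\<Sum>k\<in>T. M i k * (if j = p then - (\<Sum>l\<in>T. Y k l * M l p) / a else Y k j))" for i j
    unfolding ST(1) using ST by (simp add: XT cong: sum.cong)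
  have inv: "inv_on S M X"
    unfolding inv_on_def
  proof (intro ballI)
    fix i j assume ij: "i \<in> S" "j \<in> S"
    show "(\<Sum>k\<in>S. M i k * X k j) = (if i = j then 1 else 0)"
    proof (cases "i = p")
      case ip: True
      show ?thesis
      proof (cases "j = p")
        case True
        have "(\<Sum>k\<in>T. M p k * (- (\<Sum>l\<in>T. Y k l * M l p) / a)) = - q / a"
          unfolding neg_div_sum sw q_def W_def by (rule refl)
        thus ?thesis unfolding sumS using ip True anz by (simp add: X_def a_def[symmetric] field_simps power2_eq_square)
      next
        case False
        hence jT: "j \<in> T" using ij ST by auto
        show ?thesis unfolding sumS using ip False anz by (simp add: X_def a_def[symmetric] W_def)
      qed
    next
      case inp: False
      hence iT: "i \<in> T" using ij ST by auto
      show ?thesis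
      proof (cases "j = p")
        case True
        have "(\<Sum>k\<in>T. M i k * (- (\<Sum>l\<in>T. Y k l * M l p) / a)) = - (\<Sum>l\<in>T. (\<Sum>k\<in>T. M i k * Y k l) * M l p) / a"
          unfolding neg_div_sum sw by (rule refl)
        also have "(\<Sum>l\<in>T. (\<Sum>k\<in>T. M i k * Y k l) * M l p) = (\<Sum>l\<in>T. ((if i = l then 1 else 0) + M i p / a * W l) * M l p)"
          using YI iT by (intro sum.cong refl) auto
        also have "\<dots> = M i p + M i p / a * q"
          using iT ST unfolding q_def
          by (simp add: distrib_right sum.distrib sum_distrib_left mult.assoc if_distrib[where f="\<lambda>x. x * _"] cong: if_cong)
        finally have e: "(\<Sum>k\<in>T. M i k * (- (\<Sum>l\<in>T. Y k l * M l p) / a)) = - (M i p + M i p / a * q) / a" .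
        show ?thesis unfolding sumS using inp True anz e by (simp add: X_def field_simps power2_eq_square)
      next
        case False
        hence jT: "j \<in> T" using ij ST by auto
        have "(\<Sum>k\<in>T. M i k * Y k j) = (if i = j then 1 else 0) + M i p / a * W j" using YI iT jT by blast
        thus ?thesis unfolding sumS using inp False anz by (simp add: X_def field_simps)
      qed
    qed
  qed
  have "T \<subseteq> S" "T \<noteq> {}" "T \<noteq> S" using ST cT1 by auto
  then obtain k0 j0 where k0: "k0 \<in> T" "j0 \<in> S - T" "M k0 j0 \<noteq> 0" using good_irr[OF g] by blast
  have k0p: "M k0 p \<noteq> 0" using k0 ST by auto
  have pk0: "M p k0 \<noteq> 0" using herm[of p k0] k0p k0 ST by auto
  have cones: "\<forall>i\<in>S. \<forall>j\<in>S. cone thS (X i j)"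
  proof (intro ballI)
    fix i j assume ij: "i \<in> S" "j \<in> S"
    show "cone thS (X i j)"
    proof (cases "i = p")
      case ip: True
      show ?thesis
      proof (cases "j = p")
        case True
        thus ?thesis using ip diag_inv_cone[OF fin g inv p thS_pos] by simp
      next
        case False
        hence jT: "j \<in> T" using ij ST by auto
        have "X i j = (\<Sum>k\<in>T. Y k j * (- M p k)) / complex_of_real ar"
          using ip False unfolding X_def W_def a(1)[symmetric]
          by (simp add: sum_negf[symmetric] mult.commute)
        moreover have "cone thS (\<Sum>k\<in>T. Y k j * (- M p k))"
        proof (rule cone_sum[OF ST(3) _ _ thS_pos thS_le])
          show "\<forall>k\<in>T. Y k j * - M p k = 0 \<or> cone thS (Y k j * - M p k)"
          proof
            fix k assume kT: "k \<in> T"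
            show "Y k j * - M p k = 0 \<or> cone thS (Y k j * - M p k)"
            proof (cases "M p k = 0")
              case False
              hence "cone (thT + pi / 2 ^ card S) (Y k j * - M p k)"
                using kT jT ST by (intro ccone_mult yc' mc) auto
              thus ?thesis using thsum by simp
            qed simp
          qed
          show "\<exists>k\<in>T. Y k j * - M p k \<noteq> 0" using k0 pk0 ccone_nz[OF yc'[of k0 j]] jT by auto
        qed
        ultimately show ?thesis using cone_div a by simp
      qed
    next
      case inp: False
      hence iT: "i \<in> T" using ij ST by auto
      show ?thesis
      proof (cases "j = p")
        case True
        have "X i j = (\<Sum>k\<in>T. Y i k * (- M k p)) / complex_of_real ar"
          using inp True unfolding X_def a(1)[symmetric]
          by (simp add: sum_negf[symmetric])
        moreover have "cone thS (\<Sum>k\<in>T. Y i k * (- M k p))"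
        proof (rule cone_sum[OF ST(3) _ _ thS_pos thS_le])
          show "\<forall>k\<in>T. Y i k * - M k p = 0 \<or> cone thS (Y i k * - M k p)"
          proof
            fix k assume kT: "k \<in> T"
            show "Y i k * - M k p = 0 \<or> cone thS (Y i k * - M k p)"
            proof (cases "M k p = 0")
              case False
              hence "cone (thT + pi / 2 ^ card S) (Y i k * - M k p)"
                using kT iT ST by (intro ccone_mult yc' mc) auto
              thus ?thesis using thsum by simp
            qed simp
          qed
          show "\<exists>k\<in>T. Y i k * - M k p \<noteq> 0" using k0 k0p ccone_nz[OF yc'[of i k0]] iT by auto
        qed
        ultimately show ?thesis using cone_div a by simp
      next
        case False
        hence "j \<in> T" using ij ST by auto
        hence "ccone thT (X i j)" using yc' iT inp False unfolding X_def by simp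
        thus ?thesis using ccone_cone_mono thlt by blast
      qed
    qed
  qed
  show ?thesis using inv cones unfolding thS_def by blast
qed

lemma main:
  "finite S \<Longrightarrow> S \<noteq> {} \<Longrightarrow> good S M \<Longrightarrow>
    \<exists>X. inv_on S M X \<and> (\<forall>i\<in>S. \<forall>j\<in>S. ccone (pi / 2 - pi / 2 ^ card S) (X i j))"
proof (induction "card S" arbitrary: S M rule: less_induct)
  case less
  show ?case
  proof (cases "card S = 1")
    case True
    then obtain p where Sp: "S = {p}" by (rule card_1_singletonE)
    have d: "M p p = complex_of_real (Re (M p p))" "Re (M p p) > 0"
      using diag_pos[OF less(2) less(4)] Sp by auto
    define X where "X = (\<lambda>(i::'a) (j::'a). 1 / M p p)"
    have "inv_on S M X" unfolding inv_on_def X_def Sp using d by auto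
    moreover have "ccone 0 (1 / M p p)" unfolding ccone_def
      by (rule exI[of _ "1 / Re (M p p)"], rule exI[of _ 0]) (use d in \<open>auto simp: rcis_def\<close>)
    ultimately show ?thesis using True unfolding X_def by auto
  next
    case False
    have "card S > 0" using less(2,3) by (simp add: card_gt_0_iff)
    hence c2: "card S \<ge> 2" using False by linarith
    obtain p where p: "p \<in> S" using less(3) by blast
    have g': "good (S - {p}) (schur M p)" using schur_good[OF less(2) less(4) p c2] .
    have lt: "card (S - {p}) < card S" using p less(2) c2 by simp
    have ne: "S - {p} \<noteq> {}"
    proof
      assume "S - {p} = {}"
      hence "S = {p}" using p by auto
      thus False using c2 by simp
    qed
    obtain Y where Y: "inv_on (S - {p}) (schur M p) Y"
      "\<forall>i\<in>S - {p}. \<forall>j\<in>S - {p}. ccone (pi / 2 - pi / 2 ^ card (S - {p})) (Y i j)"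
      using less(1)[OF lt _ ne g'] less(2) by (meson finite_Diff)
    from step[OF less(2) less(4) p c2 Y] obtain X where
      "inv_on S M X" "\<forall>i\<in>S. \<forall>j\<in>S. cone (pi / 2 - pi / 2 ^ card S) (X i j)" by blast
    thus ?thesis using cone_ccone by blast
  qed
qed

theorem lemma4:
  fixes M :: "complex^'n^'n"
  assumes "CARD('n) \<ge> 2"
    and "hermitian_mat M"
    and "pos_def_mat M"
    and "irreducible_mat M"
    and "\<And>i j. i \<noteq> j \<Longrightarrow> M $ i $ j \<noteq> 0 \<Longrightarrow>
           Arg (- M $ i $ j) \<in> {- pi / 2 ^ CARD('n) <..< pi / 2 ^ CARD('n)}"
  shows "\<forall>i j. matrix_inv M $ i $ j \<noteq> 0 \<and>
           Arg (matrix_inv M $ i $ j) \<in>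
             {- pi / 2 + pi / 2 ^ CARD('n) <..< pi / 2 - pi / 2 ^ CARD('n)}"
proof -
  define M' where "M' = (\<lambda>i j. M $ i $ j)"
  have g: "good (UNIV :: 'n set) M'"
  proof (rule good_intro)
    show "\<forall>i\<in>UNIV. \<forall>j\<in>UNIV. M' i j = cnj (M' j i)"
      using assms(2) unfolding hermitian_mat_def M'_def by blast
  next
    show "\<forall>x. (\<forall>i. i \<notin> UNIV \<longrightarrow> x i = 0) \<longrightarrow> (\<exists>i\<in>UNIV. x i \<noteq> 0) \<longrightarrow>
         Im (form UNIV M' x) = 0 \<and> 0 < Re (form UNIV M' x)"
    proof (intro allI impI)
      fix x :: "'n \<Rightarrow> complex" assume "\<exists>i\<in>UNIV. x i \<noteq> 0"
      then obtain i where i: "x i \<noteq> 0" by blast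
      define xv where "xv = (\<chi> i. x i)"
      have "xv $ i \<noteq> 0" using i unfolding xv_def by simp
      hence "xv \<noteq> 0" by auto
      have imp: "xv \<noteq> 0 \<longrightarrow> (let q = (\<Sum>i\<in>UNIV. \<Sum>j\<in>UNIV. cnj (xv $ i) * M $ i $ j * xv $ j) in Im q = 0 \<and> 0 < Re q)"
        using assms(3) unfolding pos_def_mat_def by (rule spec)
      from imp \<open>xv \<noteq> 0\<close> have "let q = (\<Sum>i\<in>UNIV. \<Sum>j\<in>UNIV. cnj (xv $ i) * M $ i $ j * xv $ j) in Im q = 0 \<and> 0 < Re q"
        by (rule mp)
      thus "Im (form UNIV M' x) = 0 \<and> 0 < Re (form UNIV M' x)"
        unfolding form_def M'_def xv_def Let_def by simp
    qed
  next
    show "\<forall>A. A \<subseteq> UNIV \<longrightarrow> A \<noteq> {} \<longrightarrow> A \<noteq> UNIV \<longrightarrow> (\<exists>i\<in>A. \<exists>j\<in>UNIV - A. M' i j \<noteq> 0)"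
    proof (intro allI impI)
      fix A :: "'n set" assume A: "A \<noteq> {}" "A \<noteq> UNIV"
      show "\<exists>i\<in>A. \<exists>j\<in>UNIV - A. M' i j \<noteq> 0"
      proof (rule ccontr)
        assume "\<not> ?thesis"
        hence z: "\<And>i j. i \<in> A \<Longrightarrow> j \<notin> A \<Longrightarrow> M $ i $ j = 0" unfolding M'_def by blast
        have "\<And>i j. i \<in> A \<Longrightarrow> j \<notin> A \<Longrightarrow> M $ j $ i = 0"
          using z assms(2) unfolding hermitian_mat_def by (metis complex_cnj_zero)
        hence "\<forall>i\<in>A. \<forall>j. j \<notin> A \<longrightarrow> M $ i $ j = 0 \<and> M $ j $ i = 0" using z by blast
        hence "reducible_mat M" unfolding reducible_mat_def using A by (intro exI[of _ A]) simp
        thus False using assms(4) unfolding irreducible_mat_def by blast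
      qed
    qed
  next
    show "\<forall>i\<in>UNIV. \<forall>j\<in>UNIV. i \<noteq> j \<longrightarrow> M' i j \<noteq> 0 \<longrightarrow> cone (pi / 2 ^ card (UNIV :: 'n set)) (- M' i j)"
    proof (intro ballI impI)
      fix i j :: 'n assume ij: "i \<noteq> j" "M' i j \<noteq> 0"
      have "Arg (- M $ i $ j) \<in> {- pi / 2 ^ CARD('n) <..< pi / 2 ^ CARD('n)}"
        using assms(5) ij unfolding M'_def by blast
      moreover have "- M $ i $ j \<noteq> 0" using ij unfolding M'_def by simp
      ultimately show "cone (pi / 2 ^ card (UNIV :: 'n set)) (- M' i j)"
        unfolding M'_def by (intro Arg_cone) auto
    qed
  qed
  obtain p :: 'n where True by blast
  have pU: "p \<in> (UNIV :: 'n set)" by simp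
  have finU: "finite (UNIV :: 'n set)" by simp
  have g': "good (UNIV - {p}) (schur M' p)" using schur_good[OF finU g pU assms(1)] .
  have ne: "(UNIV :: 'n set) - {p} \<noteq> {}"
  proof
    assume "(UNIV :: 'n set) - {p} = {}"
    hence "(UNIV :: 'n set) = {p}" by auto
    hence "CARD('n) = card {p}" by (rule arg_cong)
    thus False using assms(1) by simp
  qed
  obtain Y where Y: "inv_on (UNIV - {p}) (schur M' p) Y"
      "\<forall>i\<in>UNIV - {p}. \<forall>j\<in>UNIV - {p}. ccone (pi / 2 - pi / 2 ^ card (UNIV - {p})) (Y i j)"
    using main[OF _ ne g'] finU by (meson finite_Diff)
  from step[OF finU g pU assms(1) Y] obtain X where
    X: "inv_on UNIV M' X" "\<forall>i\<in>UNIV. \<forall>j\<in>UNIV. cone (pi / 2 - pi / 2 ^ CARD('n)) (X i j)" by blast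
  define Xm where "Xm = (\<chi> i j. X i j)"
  have r: "M ** Xm = mat 1"
    using X(1) unfolding inv_on_def M'_def Xm_def
    by (simp add: vec_eq_iff matrix_matrix_mult_def mat_def)
  hence l: "Xm ** M = mat 1" using matrix_left_right_inverse by blast
  have inv: "matrix_inv M = Xm"
  proof -
    have ex: "\<exists>B. M ** B = mat 1 \<and> B ** M = mat 1" using r l by blast
    define B where "B = matrix_inv M"
    have B: "M ** B = mat 1 \<and> B ** M = mat 1"
      unfolding B_def matrix_inv_def by (rule someI_ex[OF ex])
    have "B = B ** (M ** Xm)" unfolding r by (simp only: matrix_mul_rid)
    also have "\<dots> = (B ** M) ** Xm" by (rule matrix_mul_assoc)
    also have "\<dots> = Xm" unfolding conjunct2[OF B] by (rule matrix_mul_lid)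
    finally show ?thesis unfolding B_def .
  qed
  have th: "pi / 2 - pi / 2 ^ CARD('n) \<le> pi"
  proof -
    have "0 \<le> pi / 2 ^ CARD('n)" by simp
    thus ?thesis using pi_gt_zero by linarith
  qed
  show ?thesis
  proof (intro allI)
    fix i j :: 'n
    have "matrix_inv M $ i $ j = X i j" unfolding inv Xm_def by simp
    moreover have "X i j \<noteq> 0 \<and> Arg (X i j) \<in> {- (pi / 2 - pi / 2 ^ CARD('n)) <..< pi / 2 - pi / 2 ^ CARD('n)}"
      using cone_Arg[OF _ th] X(2) by blast
    ultimately show "matrix_inv M $ i $ j \<noteq> 0 \<and>
           Arg (matrix_inv M $ i $ j) \<in>
             {- pi / 2 + pi / 2 ^ CARD('n) <..< pi / 2 - pi / 2 ^ CARD('n)}" by simp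
  qed
qed

end
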